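(* Let $(\mathbf{X},Y,\hat Y)$ be random variables on $\mathcal{X}\times\mathcal{Y}\times\mathcal{Y}$ with $P(\hat Y=i\mid Y=j)=p_{i,j}$ for all $i,j\in\{1,\dots,K\}$ (so $\sum_{i=1}^K p_{i,j}=1$ for each $j$), and assume $\hat Y$ is conditionally independent of $\mathbf{X}$ given $Y$ (i.e. $P(\mathbf{X}\mid Y)=P(\mathbf{X}\mid Y,\hat Y)$), so that $P(\hat Y=i\mid\mathbf{X})=\sum_{j=1}^K p_{i,j}P(Y=j\mid\mathbf{X})$. Let $Q$ be any probability distribution on a hypothesis class $\mathcal{H}$ and let $\hat M$ be a random variable such that, conditionally on $\mathbf{X}=\mathbf{x}$, $\hat M$ is discrete and equals $M_Q(\mathbf{x},i)$ with probability $P(\hat Y=i\mid\mathbf{X}=\mathbf{x})$, $i=1,\dots,K$. Let $\mu^{\hat M}_1=\mathbb{E}[\hat M]$, $\mu^{\hat M}_2=\mathbb{E}[\hat M^2]$, and $\gamma=\sum_{j=1}^K\max_{i\in\{1,\dots,K\}}p_{i,j}$. If $\mu^{\hat M}_1>0$, then $$R(B_{Q_{\mathrm{opt}}})\le 1-\frac{1}{\gamma}\cdot\frac{(\mu^{\hat M}_1)^2}{\mu^{\hat M}_2}.$$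
   Context: $\mathcal{X}\subset\mathbb{R}^d$, $\mathcal{Y}=\{1,\dots,K\}$, $K\ge2$; $\mathcal{H}$ is a class of classifiers $h:\mathcal{X}\to\mathcal{Y}$. For a distribution $Q$ on $\mathcal{H}$: votes $v_Q(\mathbf{x},c)=\mathbb{E}_{h\sim Q}\mathbb{1}[h(\mathbf{x})=c]$, margin $M_Q(\mathbf{x},y)=v_Q(\mathbf{x},y)-\max_{c\ne y}v_Q(\mathbf{x},c)$. $B_{Q_{\mathrm{opt}}}$ denotes the optimal (maximum a posteriori) classifier $B_{Q_{\mathrm{opt}}}(\mathbf{x})=\arg\max_{c\in\mathcal{Y}}P(Y=c\mid\mathbf{X}=\mathbf{x})$, whose risk with respect to the true label is $R(B_{Q_{\mathrm{opt}}})=\mathbb{E}_{\mathbf{X}}\big[1-\max_{j}P(Y=j\mid\mathbf{X})\big]$. $\hat Y$ is an imperfect (noisy) version of the label $Y$. *)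

theory Defs
  imports "HOL-Probability.Probability"
begin

definition vote :: "('x \<Rightarrow> nat) measure \<Rightarrow> 'x \<Rightarrow> nat \<Rightarrow> real" where
  "vote Q x c = measure Q {h \<in> space Q. h x = c}"

definition margin :: "nat \<Rightarrow> ('x \<Rightarrow> nat) measure \<Rightarrow> 'x \<Rightarrow> nat \<Rightarrow> real" where
  "margin K Q x y = vote Q x y - Max ((\<lambda>c. vote Q x c) ` ({1..K} - {y}))"

definition noise_gamma :: "nat \<Rightarrow> (nat \<Rightarrow> nat \<Rightarrow> real) \<Rightarrow> real" where
  "noise_gamma K p = (\<Sum>j=1..K. Max ((\<lambda>i. p i j) ` {1..K}))"

text \<open>Risk of the Bayes (MAP) classifier: E_X[1 - max_j P(Y=j|X)], where eta x j is
  (a version of) the conditional probability P(Y=j | X=x).\<close>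
definition bayes_risk :: "'o measure \<Rightarrow> ('o \<Rightarrow> 'x) \<Rightarrow> nat \<Rightarrow> ('x \<Rightarrow> nat \<Rightarrow> real) \<Rightarrow> real" where
  "bayes_risk M X K eta = (\<integral>\<omega>. 1 - Max ((\<lambda>j. eta (X \<omega>) j) ` {1..K}) \<partial>M)"

end

theory Submission
  imports Defs
begin

theorem theorem2:
  fixes M :: "'o measure"
    and X :: "'o \<Rightarrow> real ^ 'd" and Y Yhat :: "'o \<Rightarrow> nat" and Mhat :: "'o \<Rightarrow> real"
    and K :: nat and p :: "nat \<Rightarrow> nat \<Rightarrow> real" and eta :: "real ^ 'd \<Rightarrow> nat \<Rightarrow> real"
    and XX :: "(real ^ 'd) set" and H :: "(real ^ 'd \<Rightarrow> nat) set"
    and Q :: "(real ^ 'd \<Rightarrow> nat) measure"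
  assumes M: "prob_space M"
    and K: "K \<ge> 2"
    and X: "X \<in> borel_measurable M" "\<forall>\<omega>\<in>space M. X \<omega> \<in> XX"
    and Y: "Y \<in> M \<rightarrow>\<^sub>M count_space UNIV" "\<forall>\<omega>\<in>space M. Y \<omega> \<in> {1..K}"
    and Yhat: "Yhat \<in> M \<rightarrow>\<^sub>M count_space UNIV" "\<forall>\<omega>\<in>space M. Yhat \<omega> \<in> {1..K}"
    and H: "\<forall>h\<in>H. \<forall>x\<in>XX. h x \<in> {1..K}"
    and Q: "prob_space Q" "space Q \<subseteq> H"
           "\<forall>x\<in>XX. \<forall>c. {h \<in> space Q. h x = c} \<in> sets Q"
    and vote_meas: "\<forall>c. (\<lambda>x. vote Q x c) \<in> borel_measurable borel"
    and p_nonneg: "\<forall>i\<in>{1..K}. \<forall>j\<in>{1..K}. p i j \<ge> 0"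
    and p_sum: "\<forall>j\<in>{1..K}. (\<Sum>i=1..K. p i j) = 1"
    and noise: "\<forall>i\<in>{1..K}. \<forall>j\<in>{1..K}.
        measure M {\<omega> \<in> space M. Yhat \<omega> = i \<and> Y \<omega> = j} = p i j * measure M {\<omega> \<in> space M. Y \<omega> = j}"
    and cond_indep: "\<forall>A\<in>sets borel. \<forall>i\<in>{1..K}. \<forall>j\<in>{1..K}.
        measure M {\<omega> \<in> space M. X \<omega> \<in> A \<and> Yhat \<omega> = i \<and> Y \<omega> = j} * measure M {\<omega> \<in> space M. Y \<omega> = j}
        = measure M {\<omega> \<in> space M. X \<omega> \<in> A \<and> Y \<omega> = j} * measure M {\<omega> \<in> space M. Yhat \<omega> = i \<and> Y \<omega> = j}"
    and eta_meas: "\<forall>j. (\<lambda>x. eta x j) \<in> borel_measurable borel"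
    and eta_nonneg: "\<forall>x j. eta x j \<ge> 0"
    and eta_sum: "\<forall>x. (\<Sum>j=1..K. eta x j) = 1"
    and eta_cond: "\<forall>A\<in>sets borel. \<forall>j\<in>{1..K}.
        measure M {\<omega> \<in> space M. X \<omega> \<in> A \<and> Y \<omega> = j} = (\<integral>\<omega>. indicator A (X \<omega>) * eta (X \<omega>) j \<partial>M)"
    and Mhat: "Mhat \<in> borel_measurable M"
    and Mhat_law: "\<forall>A\<in>sets borel. \<forall>B\<in>sets (borel :: real measure).
        measure M {\<omega> \<in> space M. X \<omega> \<in> A \<and> Mhat \<omega> \<in> B}
        = measure M {\<omega> \<in> space M. X \<omega> \<in> A \<and> margin K Q (X \<omega>) (Yhat \<omega>) \<in> B}"
    and mu1_pos: "(\<integral>\<omega>. Mhat \<omega> \<partial>M) > 0"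
  shows "bayes_risk M X K eta
           \<le> 1 - (1 / noise_gamma K p) * ((\<integral>\<omega>. Mhat \<omega> \<partial>M)\<^sup>2 / (\<integral>\<omega>. (Mhat \<omega>)\<^sup>2 \<partial>M))"
proof -
  interpret prob_space M by (rule M)
  define A where "A i = {x. \<forall>c\<in>{1..K}-{i}. vote Q x c < vote Q x i}" for i
  have A_borel: "A i \<in> sets borel" for i
    unfolding A_def using vote_meas[rule_format] by measurable
  have nonempty: "{1..K}-{i} \<noteq> {}" for i
  proof -
    have "(if i = 1 then 2 else 1) \<in> {1..K}-{i}" using K by auto
    thus ?thesis by blast
  qed
  have marg: "0 < margin K Q x i \<longleftrightarrow> x \<in> A i" for x i
  proof -
    have "0 < margin K Q x i \<longleftrightarrow> Max ((\<lambda>c. vote Q x c) ` ({1..K} - {i})) < vote Q x i"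
      unfolding margin_def by auto
    also have "\<dots> \<longleftrightarrow> x \<in> A i"
      using nonempty[of i] by (subst Max_less_iff) (auto simp: A_def)
    finally show ?thesis .
  qed
  have disj: "i = k" if "x \<in> A i" "x \<in> A k" "i \<in> {1..K}" "k \<in> {1..K}" for x i k
  proof (rule ccontr)
    assume "i \<noteq> k"
    then have "vote Q x k < vote Q x i" "vote Q x i < vote Q x k"
      using that unfolding A_def by auto
    then show False by simp
  qed
  have etab: "eta x j \<le> 1" if "j \<in> {1..K}" for x j
  proof -
    have "eta x j \<le> (\<Sum>j=1..K. eta x j)"
      by (rule member_le_sum) (use that eta_nonneg in auto)
    then show ?thesis using eta_sum by simp
  qed
  have etaX: "(\<lambda>\<omega>. eta (X \<omega>) j) \<in> borel_measurable M" for j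
    using measurable_compose[OF X(1) eta_meas[rule_format]] by simp
  have MaxX: "(\<lambda>\<omega>. Max ((\<lambda>j. eta (X \<omega>) j) ` {1..K})) \<in> borel_measurable M"
    by (rule borel_measurable_Max) (auto intro: etaX)
  have Max_nonneg: "0 \<le> Max ((\<lambda>j. eta x j) ` {1..K})" for x
  proof -
    have "eta x 1 \<le> Max ((\<lambda>j. eta x j) ` {1..K})" using K by (intro Max_ge) auto
    then show ?thesis using eta_nonneg by (meson order_trans)
  qed
  have Max_le: "Max ((\<lambda>j. eta x j) ` {1..K}) \<le> 1" for x
    using K etab by (subst Max_le_iff) auto
  have intMax: "integrable M (\<lambda>\<omega>. Max ((\<lambda>j. eta (X \<omega>) j) ` {1..K}))"
    by (rule integrable_const_bound[where B=1]) (use Max_nonneg Max_le MaxX in auto)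
  define E where "E = (\<integral>\<omega>. Max ((\<lambda>j. eta (X \<omega>) j) ` {1..K}) \<partial>M)"
  have R: "bayes_risk M X K eta = 1 - E"
    unfolding bayes_risk_def E_def
    using Bochner_Integration.integral_diff[OF _ intMax, of "\<lambda>_. 1"] by (simp add: prob_space)
  have E_nonneg: "0 \<le> E" unfolding E_def using Max_nonneg by simp
  define \<gamma> where "\<gamma> = noise_gamma K p"
  have gamma_nonneg: "0 \<le> \<gamma>"
    unfolding \<gamma>_def noise_gamma_def
  proof (rule sum_nonneg)
    fix j assume j: "j \<in> {1..K}"
    have "p 1 j \<le> Max ((\<lambda>i. p i j) ` {1..K})" using K by (intro Max_ge) auto
    moreover have "0 \<le> p 1 j" using p_nonneg j K by auto
    ultimately show "0 \<le> Max ((\<lambda>i. p i j) ` {1..K})" by linarith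
  qed
  define S where "S = {\<omega>\<in>space M. 0 < Mhat \<omega>}"
  have S_sets: "S \<in> sets M" unfolding S_def using Mhat by measurable
  define q where "q = measure M S"
  have q_eq: "q = measure M {\<omega>\<in>space M. 0 < margin K Q (X \<omega>) (Yhat \<omega>)}"
    using Mhat_law[rule_format, of UNIV "{0<..}"] by (simp add: q_def S_def)
  define C where "C i j = {\<omega>\<in>space M. X \<omega> \<in> A i \<and> Yhat \<omega> = i \<and> Y \<omega> = j}" for i j
  have C_sets: "C i j \<in> sets M" for i j
    unfolding C_def using X(1) Y(1) Yhat(1) A_borel[of i] by measurable
  define D where "D i = {\<omega>\<in>space M. X \<omega> \<in> A i \<and> Yhat \<omega> = i}" for i
  have D_sets: "D i \<in> sets M" for i
    unfolding D_def using X(1) Yhat(1) A_borel[of i] by measurable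
  have set_eq: "{\<omega>\<in>space M. 0 < margin K Q (X \<omega>) (Yhat \<omega>)} = (\<Union>i\<in>{1..K}. D i)"
    using Yhat(2) marg unfolding D_def by auto
  have set_eq2: "D i = (\<Union>j\<in>{1..K}. C i j)" for i
    using Y(2) unfolding C_def D_def by auto
  have meas_C: "measure M (C i j) = p i j * (\<integral>\<omega>. indicator (A i) (X \<omega>) * eta (X \<omega>) j \<partial>M)"
    if i: "i \<in> {1..K}" and j: "j \<in> {1..K}" for i j
  proof -
    define a where "a = measure M (C i j)"
    define b where "b = measure M {\<omega>\<in>space M. X \<omega> \<in> A i \<and> Y \<omega> = j}"
    define y where "y = measure M {\<omega>\<in>space M. Y \<omega> = j}"
    have Yj: "{\<omega>\<in>space M. Y \<omega> = j} \<in> sets M" using Y(1) by measurable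
    have 1: "a * y = b * (p i j * y)"
      using cond_indep[rule_format, OF A_borel i j] noise[rule_format, OF i j]
      unfolding a_def b_def y_def C_def by simp
    have "a = p i j * b"
    proof cases
      assume y0: "y = 0"
      have "a \<le> y" unfolding a_def y_def
        by (rule finite_measure_mono) (auto simp: C_def Yj)
      moreover have "b \<le> y" unfolding b_def y_def
        by (rule finite_measure_mono) (auto simp: Yj)
      ultimately have "a = 0" "b = 0" using y0 unfolding a_def b_def by (auto intro: antisym)
      then show ?thesis by simp
    next
      assume "y \<noteq> 0"
      with 1 show ?thesis by (metis mult.assoc mult.commute mult_right_cancel)
    qed
    then show ?thesis using eta_cond[rule_format, OF A_borel j] unfolding a_def b_def by simp
  qed
  have int_term: "integrable M (\<lambda>\<omega>. indicator (A i) (X \<omega>) * eta (X \<omega>) j)" if j: "j \<in> {1..K}" for i j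
  proof (rule integrable_const_bound[where B=1])
    show "AE x in M. norm (indicator (A i) (X x) * eta (X x) j) \<le> (1::real)"
      using etab[OF j] eta_nonneg by (auto simp: indicator_def)
    have "(\<lambda>\<omega>. indicator (A i) (X \<omega>) :: real) \<in> borel_measurable M"
      using X(1) A_borel[of i] by measurable
    then show "(\<lambda>\<omega>. indicator (A i) (X \<omega>) * eta (X \<omega>) j) \<in> borel_measurable M"
      using etaX by measurable
  qed
  define g where "g \<omega> = (\<Sum>i\<in>{1..K}. \<Sum>j\<in>{1..K}. p i j * (indicator (A i) (X \<omega>) * eta (X \<omega>) j))" for \<omega>
  have int_g: "integrable M g" unfolding g_def by (intro Bochner_Integration.integrable_sum Bochner_Integration.integrable_mult_right int_term) auto
  have q_g: "q = integral\<^sup>L M g"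
  proof -
    have "q = (\<Sum>i\<in>{1..K}. measure M (D i))"
      unfolding q_eq set_eq
      by (rule finite_measure_finite_Union) (auto simp: D_sets[unfolded D_def] disjoint_family_on_def D_def dest: disj)
    also have "\<dots> = (\<Sum>i\<in>{1..K}. \<Sum>j\<in>{1..K}. measure M (C i j))"
      unfolding set_eq2
      by (intro sum.cong refl finite_measure_finite_Union) (auto simp: C_sets[unfolded C_def] disjoint_family_on_def C_def)
    also have "\<dots> = (\<Sum>i\<in>{1..K}. \<Sum>j\<in>{1..K}. p i j * (\<integral>\<omega>. indicator (A i) (X \<omega>) * eta (X \<omega>) j \<partial>M))"
      by (intro sum.cong refl meas_C) auto
    also have "\<dots> = integral\<^sup>L M g"
    proof -
      have "integral\<^sup>L M g = (\<Sum>i\<in>{1..K}. \<integral>\<omega>. (\<Sum>j\<in>{1..K}. p i j * (indicator (A i) (X \<omega>) * eta (X \<omega>) j)) \<partial>M)"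
        unfolding g_def
        by (rule Bochner_Integration.integral_sum) (intro Bochner_Integration.integrable_sum Bochner_Integration.integrable_mult_right int_term; simp)
      also have "\<dots> = (\<Sum>i\<in>{1..K}. \<Sum>j\<in>{1..K}. p i j * (\<integral>\<omega>. indicator (A i) (X \<omega>) * eta (X \<omega>) j \<partial>M))"
        by (intro sum.cong refl) (simp add: Bochner_Integration.integral_sum int_term)
      finally show ?thesis by simp
    qed
    finally show ?thesis .
  qed
  have g_le: "g \<omega> \<le> \<gamma> * Max ((\<lambda>j. eta (X \<omega>) j) ` {1..K})" for \<omega>
  proof -
    let ?m = "Max ((\<lambda>j. eta (X \<omega>) j) ` {1..K})"
    have inner: "(\<Sum>i\<in>{1..K}. p i j * indicator (A i) (X \<omega>)) \<le> Max ((\<lambda>i. p i j) ` {1..K})"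
      if j: "j \<in> {1..K}" for j
    proof -
      have Mx0: "0 \<le> Max ((\<lambda>i. p i j) ` {1..K})"
      proof -
        have "p 1 j \<le> Max ((\<lambda>i. p i j) ` {1..K})" using K by (intro Max_ge) auto
        moreover have "0 \<le> p 1 j" using p_nonneg j K by auto
        ultimately show ?thesis by linarith
      qed
      show ?thesis
      proof (cases "\<exists>i0\<in>{1..K}. X \<omega> \<in> A i0")
        case True
        then obtain i0 where i0: "i0 \<in> {1..K}" "X \<omega> \<in> A i0" by blast
        have "(\<Sum>i\<in>{1..K}. p i j * indicator (A i) (X \<omega>)) = p i0 j * indicator (A i0) (X \<omega>)"
          by (rule sum.remove[OF _ i0(1), THEN trans]) (auto intro!: sum.neutral dest: disj[OF _ i0(2) _ i0(1)])
        also have "\<dots> = p i0 j" using i0 by simp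
        also have "\<dots> \<le> Max ((\<lambda>i. p i j) ` {1..K})" using i0 by (intro Max_ge) auto
        finally show ?thesis .
      next
        case False
        then have "(\<Sum>i\<in>{1..K}. p i j * indicator (A i) (X \<omega>)) = 0"
          by (intro sum.neutral) auto
        then show ?thesis using Mx0 by simp
      qed
    qed
    have "g \<omega> = (\<Sum>j\<in>{1..K}. eta (X \<omega>) j * (\<Sum>i\<in>{1..K}. p i j * indicator (A i) (X \<omega>)))"
    proof -
      have "g \<omega> = (\<Sum>j\<in>{1..K}. \<Sum>i\<in>{1..K}. eta (X \<omega>) j * (p i j * indicator (A i) (X \<omega>)))"
        unfolding g_def by (subst sum.swap) (simp add: algebra_simps)
      then show ?thesis by (simp only: sum_distrib_left)
    qed
    also have "\<dots> \<le> (\<Sum>j\<in>{1..K}. ?m * Max ((\<lambda>i. p i j) ` {1..K}))"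
    proof (rule sum_mono)
      fix j assume j: "j \<in> {1..K}"
      have "eta (X \<omega>) j \<le> ?m" using j by (intro Max_ge) auto
      have "0 \<le> (\<Sum>i\<in>{1..K}. p i j * indicator (A i) (X \<omega>))"
        using p_nonneg j by (intro sum_nonneg) auto
      show "eta (X \<omega>) j * (\<Sum>i\<in>{1..K}. p i j * indicator (A i) (X \<omega>)) \<le> ?m * Max ((\<lambda>i. p i j) ` {1..K})"
        by (rule mult_mono) (use inner[OF j] eta_nonneg Max_nonneg \<open>eta (X \<omega>) j \<le> ?m\<close> \<open>0 \<le> (\<Sum>i\<in>{1..K}. p i j * indicator (A i) (X \<omega>))\<close> in auto)
    qed
    also have "\<dots> = \<gamma> * ?m"
      unfolding \<gamma>_def noise_gamma_def by (simp add: sum_distrib_left mult.commute)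
    finally show ?thesis .
  qed
  have q_le: "q \<le> \<gamma> * E"
  proof -
    have "integral\<^sup>L M g \<le> (\<integral>\<omega>. \<gamma> * Max ((\<lambda>j. eta (X \<omega>) j) ` {1..K}) \<partial>M)"
      by (rule integral_mono) (use int_g intMax g_le in auto)
    then show ?thesis unfolding q_g E_def by simp
  qed
  have q_nonneg: "0 \<le> q" unfolding q_def by simp
  define \<mu>1 where "\<mu>1 = (\<integral>\<omega>. Mhat \<omega> \<partial>M)"
  define \<mu>2 where "\<mu>2 = (\<integral>\<omega>. (Mhat \<omega>)\<^sup>2 \<partial>M)"
  have mu1: "0 < \<mu>1" using mu1_pos unfolding \<mu>1_def .
  have intM: "integrable M Mhat"
    using mu1 not_integrable_integral_eq[of M Mhat] unfolding \<mu>1_def by fastforce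
  have key: "\<mu>2 = 0 \<or> \<mu>1\<^sup>2 \<le> \<mu>2 * q"
  proof (cases "integrable M (\<lambda>\<omega>. (Mhat \<omega>)\<^sup>2)")
    case True
    define a where "a = (\<integral>\<omega>. Mhat \<omega> * indicator S \<omega> \<partial>M)"
    define b where "b = (\<integral>\<omega>. (Mhat \<omega>)\<^sup>2 * indicator S \<omega> \<partial>M)"
    have intMS: "integrable M (\<lambda>\<omega>. Mhat \<omega> * indicator S \<omega>)"
      by (rule integrable_real_mult_indicator[OF S_sets intM])
    have intM2S: "integrable M (\<lambda>\<omega>. (Mhat \<omega>)\<^sup>2 * indicator S \<omega>)"
      by (rule integrable_real_mult_indicator[OF S_sets True])
    have intS: "integrable M (indicator S :: 'o \<Rightarrow> real)"
      using S_sets by (intro integrable_real_indicator) (auto simp: emeasure_eq_measure)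
    have mua: "\<mu>1 \<le> a" unfolding \<mu>1_def a_def
      by (rule integral_mono[OF intM intMS]) (auto simp: S_def indicator_def)
    have bmu: "b \<le> \<mu>2" unfolding \<mu>2_def b_def
      by (rule integral_mono[OF intM2S True]) (auto simp: indicator_def)
    have quad: "0 \<le> b - 2 * c * a + c\<^sup>2 * q" for c
    proof -
      have eq: "(\<lambda>\<omega>. (Mhat \<omega> - c)\<^sup>2 * indicator S \<omega>) =
        (\<lambda>\<omega>. ((Mhat \<omega>)\<^sup>2 * indicator S \<omega> - (2 * c) * (Mhat \<omega> * indicator S \<omega>)) + c\<^sup>2 * indicator S \<omega>)"
        by (auto simp: power2_eq_square algebra_simps)
      have "(\<integral>\<omega>. (Mhat \<omega> - c)\<^sup>2 * indicator S \<omega> \<partial>M) = b - 2 * c * a + c\<^sup>2 * q"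
        unfolding eq a_def b_def q_def
        using intMS intM2S intS S_sets
        by (simp add: integral_add integral_diff Int_absorb2 sets.sets_into_space)
      moreover have "0 \<le> (\<integral>\<omega>. (Mhat \<omega> - c)\<^sup>2 * indicator S \<omega> \<partial>M)"
        by (rule Bochner_Integration.integral_nonneg) simp
      ultimately show ?thesis by simp
    qed
    have apos: "0 < a" using mu1 mua by simp
    have ab: "a\<^sup>2 \<le> b * q"
    proof (cases "q = 0")
      case True
      have "0 \<le> b - 2 * ((b + 1) / (2 * a)) * a + ((b+1) / (2*a))\<^sup>2 * q" by (rule quad)
      then show ?thesis using apos True by simp
    next
      case False
      then have qp: "0 < q" using q_nonneg by simp
      have "0 \<le> b - 2 * (a / q) * a + (a / q)\<^sup>2 * q" by (rule quad)
      also have "\<dots> = b - a\<^sup>2 / q" using qp by (simp add: power2_eq_square field_simps)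
      finally show ?thesis using qp by (simp add: field_simps)
    qed
    have "\<mu>1\<^sup>2 \<le> a\<^sup>2" using mu1 mua by (simp add: power_mono)
    also have "\<dots> \<le> b * q" by (rule ab)
    also have "\<dots> \<le> \<mu>2 * q" using bmu q_nonneg by (simp add: mult_right_mono)
    finally show ?thesis by simp
  next
    case False
    then have "\<mu>2 = 0" unfolding \<mu>2_def by (simp add: not_integrable_integral_eq)
    then show ?thesis by simp
  qed
  have mu2_nonneg: "0 \<le> \<mu>2" unfolding \<mu>2_def by (rule Bochner_Integration.integral_nonneg) simp
  show ?thesis
  proof (cases "\<mu>2 = 0")
    case True
    then show ?thesis unfolding R \<mu>2_def using E_nonneg by simp
  next
    case False
    then have mu2p: "0 < \<mu>2" using mu2_nonneg by simp
    have k: "\<mu>1\<^sup>2 \<le> \<mu>2 * q" using key False by simp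
    also have "\<dots> \<le> \<mu>2 * (\<gamma> * E)" using q_le mu2p by simp
    finally have k2: "\<mu>1\<^sup>2 \<le> \<mu>2 * (\<gamma> * E)" .
    have "0 < \<mu>1\<^sup>2" using mu1 by simp
    then have gp: "0 < \<gamma>" using k2 gamma_nonneg by (cases "\<gamma> = 0") auto
    have "(1 / \<gamma>) * (\<mu>1\<^sup>2 / \<mu>2) \<le> E"
      using k2 gp mu2p by (simp add: field_simps mult.commute mult.left_commute)
    then show ?thesis unfolding R \<gamma>_def[symmetric] \<mu>1_def[symmetric] \<mu>2_def[symmetric] by simp
  qed
qed

end
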